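(* Any two countable metric spaces that satisfy the almost extension property are almost isometric.
   Context: For $\lambda>1$, an injection $f$ is $\lambda$-bi-Lipschitz if for all distinct $a,b$ in its domain $d(f(a),f(b))<\lambda d(a,b)$ and $d(a,b)<\lambda d(f(a),f(b))$. A metric space $X$ has the almost extension property if for every finite metric space $F=\{x_0,\dots,x_{n-1},x_n\}$ and every $\lambda>1$, every $\lambda$-bi-Lipschitz map $f:\{x_0,\dots,x_{n-1}\}\to X$ extends to a $\lambda$-bi-Lipschitz map $\hat f:F\to X$. Two metric spaces $X,Y$ are almost isometric if for every $\lambda>1$ there is a $\lambda$-bi-Lipschitz bijection from $X$ onto $Y$. *)

theory Defs
  imports "HOL-Analysis.Analysis"
begin

definition bilip :: "real \<Rightarrow> ('a \<Rightarrow> 'a \<Rightarrow> real) \<Rightarrow> ('b \<Rightarrow> 'b \<Rightarrow> real)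
    \<Rightarrow> 'a set \<Rightarrow> 'b set \<Rightarrow> ('a \<Rightarrow> 'b) \<Rightarrow> bool" where
  "bilip lam dA dB A B f \<longleftrightarrow>
     f ` A \<subseteq> B \<and> inj_on f A \<and>
     (\<forall>a\<in>A. \<forall>b\<in>A. a \<noteq> b \<longrightarrow>
        dB (f a) (f b) < lam * dA a b \<and> dA a b < lam * dB (f a) (f b))"

text \<open>A finite metric space F = {x_0,...,x_n} is represented,
  up to isometry, as a metric dF on the index set {0..n}; the partial map is defined on
  {0..<n} = {x_0,...,x_(n-1)}.\<close>
definition almost_extension_property :: "'a set \<Rightarrow> ('a \<Rightarrow> 'a \<Rightarrow> real) \<Rightarrow> bool" where
  "almost_extension_property X dX \<longleftrightarrow>
     (\<forall>(n::nat) (dF :: nat \<Rightarrow> nat \<Rightarrow> real) (lam::real) (f :: nat \<Rightarrow> 'a).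
        Metric_space {0..n} dF \<and> lam > 1 \<and> bilip lam dF dX {0..<n} X f \<longrightarrow>
        (\<exists>g. bilip lam dF dX {0..n} X g \<and> (\<forall>i<n. g i = f i)))"

definition almost_isometric :: "'a set \<Rightarrow> ('a \<Rightarrow> 'a \<Rightarrow> real) \<Rightarrow> 'b set \<Rightarrow> ('b \<Rightarrow> 'b \<Rightarrow> real) \<Rightarrow> bool" where
  "almost_isometric X dX Y dY \<longleftrightarrow>
     (\<forall>lam::real. lam > 1 \<longrightarrow> (\<exists>f. bilip lam dX dY X Y f \<and> bij_betw f X Y))"

end

theory Submission
  imports Defs
begin

definition goodrel :: "real \<Rightarrow> ('a \<Rightarrow> 'a \<Rightarrow> real) \<Rightarrow> ('b \<Rightarrow> 'b \<Rightarrow> real)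
    \<Rightarrow> 'a set \<Rightarrow> 'b set \<Rightarrow> ('a \<times> 'b) set \<Rightarrow> bool" where
  "goodrel lam dX dY X Y P \<longleftrightarrow> finite P \<and> P \<subseteq> X \<times> Y \<and>
     (\<forall>a b a' b'. (a,b) \<in> P \<longrightarrow> (a',b') \<in> P \<longrightarrow> (a = a' \<longleftrightarrow> b = b') \<and>
        (a \<noteq> a' \<longrightarrow> dY b b' < lam * dX a a' \<and> dX a a' < lam * dY b b'))"

lemma goodrel_conv:
  assumes "goodrel lam dX dY X Y P"
  shows "goodrel lam dY dX Y X (converse P)"
  using assms unfolding goodrel_def by blast

lemma goodrel_empty: "goodrel lam dX dY X Y {}"
  unfolding goodrel_def by auto

lemma forth:
  assumes MX: "Metric_space X dX" and MY: "Metric_space Y dY"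
    and AY: "almost_extension_property Y dY" and lam: "lam > 1"
    and G: "goodrel lam dX dY X Y P" and x: "x \<in> X"
  shows "\<exists>Q. P \<subseteq> Q \<and> goodrel lam dX dY X Y Q \<and> x \<in> Domain Q"
proof (cases "x \<in> Domain P")
  case True
  then show ?thesis using G by blast
next
  case False
  note xnot = False
  have finP: "finite P" and PXY: "P \<subseteq> X \<times> Y"
    and PP: "\<And>a b a' b'. (a,b) \<in> P \<Longrightarrow> (a',b') \<in> P \<Longrightarrow> (a = a' \<longleftrightarrow> b = b') \<and>
        (a \<noteq> a' \<longrightarrow> dY b b' < lam * dX a a' \<and> dX a a' < lam * dY b b')"
    using G unfolding goodrel_def by auto
  define n where "n = card P"
  obtain e where e: "bij_betw e {0..<n} P"
    using ex_bij_betw_nat_finite[OF finP] n_def by blast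
  define a where "a i = (if i < n then fst (e i) else x)" for i
  define f where "f i = snd (e i)" for i
  define dF where "dF i j = dX (a i) (a j)" for i j
  have eP: "i < n \<Longrightarrow> e i \<in> P" for i using e by (auto simp: bij_betw_def)
  have ea: "i < n \<Longrightarrow> (a i, f i) \<in> P" for i using eP[of i] by (simp add: a_def f_def)
  have aX: "a i \<in> X" for i
    using ea[of i] PXY x by (cases "i < n") (auto simp: a_def)
  have fY: "i < n \<Longrightarrow> f i \<in> Y" for i using ea[of i] PXY by auto
  have einj: "i < n \<Longrightarrow> j < n \<Longrightarrow> e i = e j \<Longrightarrow> i = j" for i j
    using e by (auto simp: bij_betw_def inj_on_def)
  have ainj: "i \<le> n \<Longrightarrow> j \<le> n \<Longrightarrow> a i = a j \<Longrightarrow> i = j" for i j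
  proof -
    assume ij: "i \<le> n" "j \<le> n" "a i = a j"
    show "i = j"
    proof (cases "i < n")
      case True
      show ?thesis
      proof (cases "j < n")
        case True
        have "f i = f j" using PP[OF ea[of i] ea[of j]] ij \<open>i < n\<close> True by auto
        then have "e i = e j" using ij \<open>i < n\<close> True by (simp add: a_def f_def prod_eq_iff)
        then show ?thesis using einj \<open>i < n\<close> True by blast
      next
        case False
        then have "a j = x" by (simp add: a_def)
        then have "(x, f i) \<in> P" using ea[OF \<open>i < n\<close>] ij by simp
        then show ?thesis using xnot by blast
      qed
    next
      case False
      show ?thesis
      proof (cases "j < n")
        case True
        have "a i = x" using False by (simp add: a_def)
        then have "(x, f j) \<in> P" using ea[OF True] ij by simp
        then show ?thesis using xnot by blast
      next
        case False
        then show ?thesis using ij \<open>\<not> i < n\<close> by auto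
      qed
    qed
  qed
  have MF: "Metric_space {0..n} dF"
  proof
    fix i j k
    show "0 \<le> dF i j" unfolding dF_def using Metric_space.nonneg[OF MX] by blast
    show "dF i j = dF j i" unfolding dF_def using Metric_space.commute[OF MX] by blast
    show "i \<in> {0..n} \<Longrightarrow> j \<in> {0..n} \<Longrightarrow> (dF i j = 0) = (i = j)"
      unfolding dF_def using Metric_space.zero[OF MX aX aX] ainj by auto
    show "i \<in> {0..n} \<Longrightarrow> j \<in> {0..n} \<Longrightarrow> k \<in> {0..n} \<Longrightarrow> dF i k \<le> dF i j + dF j k"
      unfolding dF_def using Metric_space.triangle[OF MX aX aX aX] by blast
  qed
  have BF: "bilip lam dF dY {0..<n} Y f"
    unfolding bilip_def
  proof (intro conjI ballI impI)
    show "f ` {0..<n} \<subseteq> Y" using fY by auto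
    show "inj_on f {0..<n}"
    proof (rule inj_onI)
      fix i j assume "i \<in> {0..<n}" "j \<in> {0..<n}" "f i = f j"
      then show "i = j" using PP[OF ea[of i] ea[of j]] ainj[of i j] by auto
    qed
    fix i j assume "i \<in> {0..<n}" "j \<in> {0..<n}" "i \<noteq> j"
    then have "a i \<noteq> a j" using ainj[of i j] by auto
    then show "dY (f i) (f j) < lam * dF i j" "dF i j < lam * dY (f i) (f j)"
      using PP[OF ea[of i] ea[of j]] \<open>i \<in> {0..<n}\<close> \<open>j \<in> {0..<n}\<close> by (auto simp: dF_def)
  qed
  obtain g where g: "bilip lam dF dY {0..n} Y g" and gf: "\<forall>i<n. g i = f i"
    using AY MF lam BF unfolding almost_extension_property_def by blast
  have gY: "g n \<in> Y" using g unfolding bilip_def by auto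
  have ginj: "inj_on g {0..n}" using g unfolding bilip_def by auto
  have gd: "i < n \<Longrightarrow> dY (g n) (g i) < lam * dF n i \<and> dF n i < lam * dY (g n) (g i)" for i
    using g unfolding bilip_def by auto
  define Q where "Q = insert (x, g n) P"
  have key: "(a',b') \<in> P \<Longrightarrow> x \<noteq> a' \<and> g n \<noteq> b' \<and> dY (g n) b' < lam * dX x a' \<and> dX x a' < lam * dY (g n) b'" for a' b'
  proof -
    assume ab: "(a',b') \<in> P"
    then obtain i where i: "i < n" "e i = (a',b')" using e by (auto simp: bij_betw_def)
    have ai: "a i = a'" "f i = b'" using i by (auto simp: a_def f_def)
    have "x \<noteq> a'" using xnot ab by auto
    moreover have "g n \<noteq> b'"
    proof
      assume "g n = b'"
      then have "g n = g i" using gf i ai by simp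
      moreover have "n \<in> {0..n}" "i \<in> {0..n}" using i(1) by auto
      ultimately have "n = i" using ginj by (meson inj_onD)
      then show False using i(1) by simp
    qed
    moreover have "a n = x" by (simp add: a_def)
    ultimately show ?thesis using gd[OF i(1)] ai gf i by (auto simp: dF_def)
  qed
  have "goodrel lam dX dY X Y Q"
    unfolding goodrel_def
  proof (intro conjI allI impI)
    show "finite Q" using finP by (simp add: Q_def)
    show "Q \<subseteq> X \<times> Y" using PXY x gY by (auto simp: Q_def)
    fix a1 b1 a2 b2 assume h1: "(a1,b1) \<in> Q" and h2: "(a2,b2) \<in> Q"
    have cm: "dX u v = dX v u" "dY s t = dY t s" for u v s t
      using Metric_space.commute[OF MX] Metric_space.commute[OF MY] by blast+
    show "(a1 = a2) = (b1 = b2)"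
      using h1 h2 key PP unfolding Q_def by (metis insert_iff prod.inject)
    show "a1 \<noteq> a2 \<Longrightarrow> dY b1 b2 < lam * dX a1 a2"
      using h1 h2 key PP cm unfolding Q_def by (metis insert_iff prod.inject)
    show "a1 \<noteq> a2 \<Longrightarrow> dX a1 a2 < lam * dY b1 b2"
      using h1 h2 key PP cm unfolding Q_def by (metis insert_iff prod.inject)
  qed
  then show ?thesis by (auto simp: Q_def)
qed

lemma aep_nonempty:
  assumes "almost_extension_property X dX"
  shows "X \<noteq> {}"
proof -
  have M: "Metric_space {0..(0::nat)} (\<lambda>_ _. 0)"
    by unfold_locales auto
  have B: "bilip 2 (\<lambda>_ _. 0) dX {0..<(0::nat)} X (\<lambda>_. undefined)"
    unfolding bilip_def by auto
  obtain g where "bilip 2 (\<lambda>_ _. 0) dX {0..(0::nat)} X g"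
    using assms M B unfolding almost_extension_property_def
    by (metis one_less_numeral_iff semiring_norm(76))
  then have "g 0 \<in> X" unfolding bilip_def by auto
  then show ?thesis by auto
qed

lemma back_step:
  assumes MX: "Metric_space X dX" and MY: "Metric_space Y dY"
    and AX: "almost_extension_property X dX" and lam: "lam > 1"
    and G: "goodrel lam dX dY X Y P" and y: "y \<in> Y"
  shows "\<exists>Q. P \<subseteq> Q \<and> goodrel lam dX dY X Y Q \<and> y \<in> Range Q"
proof -
  obtain Q where "converse P \<subseteq> Q" "goodrel lam dY dX Y X Q" "y \<in> Domain Q"
    using forth[OF MY MX AX lam goodrel_conv[OF G] y] by blast
  then show ?thesis using goodrel_conv[of lam dY dX Y X Q]
    by (intro exI[of _ "converse Q"]) auto
qed

theorem fact3p5: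
  fixes X :: "'a set" and dX :: "'a \<Rightarrow> 'a \<Rightarrow> real"
    and Y :: "'b set" and dY :: "'b \<Rightarrow> 'b \<Rightarrow> real"
  assumes "Metric_space X dX" and "Metric_space Y dY"
    and "countable X" and "countable Y"
    and "almost_extension_property X dX" and "almost_extension_property Y dY"
  shows "almost_isometric X dX Y dY"
  unfolding almost_isometric_def
proof (intro allI impI)
  fix lam :: real assume lam: "lam > 1"
  have Xne: "X \<noteq> {}" using aep_nonempty assms(5) by blast
  have Yne: "Y \<noteq> {}" using aep_nonempty assms(6) by blast
  define ex where "ex = from_nat_into X"
  define ey where "ey = from_nat_into Y"
  have exX: "ex k \<in> X" for k using from_nat_into[OF Xne] ex_def by simp
  have eyY: "ey k \<in> Y" for k using from_nat_into[OF Yne] ey_def by simp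
  have rX: "range ex = X" using range_from_nat_into[OF Xne assms(3)] ex_def by simp
  have rY: "range ey = Y" using range_from_nat_into[OF Yne assms(4)] ey_def by simp
  define good where "good = goodrel lam dX dY X Y"
  define nxt where "nxt P k = (let Q = (SOME Q. P \<subseteq> Q \<and> good Q \<and> ex k \<in> Domain Q)
     in SOME R. Q \<subseteq> R \<and> good R \<and> ey k \<in> Range R)" for P k
  have nxt: "good P \<Longrightarrow> P \<subseteq> nxt P k \<and> good (nxt P k) \<and> ex k \<in> Domain (nxt P k) \<and> ey k \<in> Range (nxt P k)" for P k
  proof -
    assume gP: "good P"
    define Q where "Q = (SOME Q. P \<subseteq> Q \<and> good Q \<and> ex k \<in> Domain Q)"
    have "\<exists>Q. P \<subseteq> Q \<and> good Q \<and> ex k \<in> Domain Q"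
      using forth[OF assms(1,2,6) lam _ exX] gP good_def by blast
    then have Q: "P \<subseteq> Q \<and> good Q \<and> ex k \<in> Domain Q" unfolding Q_def by (rule someI_ex)
    define R where "R = (SOME R. Q \<subseteq> R \<and> good R \<and> ey k \<in> Range R)"
    have "\<exists>R. Q \<subseteq> R \<and> good R \<and> ey k \<in> Range R"
      using back_step[OF assms(1,2,5) lam _ eyY] Q good_def by blast
    then have R: "Q \<subseteq> R \<and> good R \<and> ey k \<in> Range R" unfolding R_def by (rule someI_ex)
    have "nxt P k = R" unfolding nxt_def R_def Q_def Let_def by simp
    then show ?thesis using Q R by blast
  qed
  define C where "C = rec_nat {} (\<lambda>k P. nxt P k)"
  have C0: "C 0 = {}" and CS: "C (Suc k) = nxt (C k) k" for k by (simp_all add: C_def)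
  have gC: "good (C k)" for k
    by (induction k) (auto simp: C0 CS good_def goodrel_empty nxt[unfolded good_def])
  have Cmono: "C k \<subseteq> C (Suc k)" for k using nxt[OF gC] CS by auto
  have Cle: "k \<le> m \<Longrightarrow> C k \<subseteq> C m" for k m
    using lift_Suc_mono_le[of C, OF Cmono] by blast
  define U where "U = (\<Union>k. C k)"
  have UXY: "U \<subseteq> X \<times> Y" using gC unfolding U_def good_def goodrel_def by blast
  have DU: "ex k \<in> Domain U" for k
    using nxt[OF gC, of k k] CS unfolding U_def by blast
  have RU: "ey k \<in> Range U" for k
    using nxt[OF gC, of k k] CS unfolding U_def by blast
  have UU: "(a,b) \<in> U \<Longrightarrow> (a',b') \<in> U \<Longrightarrow> (a = a' \<longleftrightarrow> b = b') \<and>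
        (a \<noteq> a' \<longrightarrow> dY b b' < lam * dX a a' \<and> dX a a' < lam * dY b b')" for a b a' b'
  proof -
    assume "(a,b) \<in> U" "(a',b') \<in> U"
    then obtain k m where "(a,b) \<in> C k" "(a',b') \<in> C m" unfolding U_def by blast
    then have "(a,b) \<in> C (max k m)" "(a',b') \<in> C (max k m)" using Cle
      by (meson max.cobounded1 max.cobounded2 subsetD)+
    then show ?thesis using gC[of "max k m"] unfolding good_def goodrel_def by blast
  qed
  define h where "h x = (SOME y. (x,y) \<in> U)" for x
  have hU: "x \<in> X \<Longrightarrow> (x, h x) \<in> U" for x
  proof -
    assume "x \<in> X"
    then obtain k where "x = ex k" using rX by auto
    then have "\<exists>y. (x,y) \<in> U" using DU by blast
    then show ?thesis unfolding h_def by (rule someI_ex)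
  qed
  have hY: "x \<in> X \<Longrightarrow> h x \<in> Y" for x using hU UXY by blast
  have inj: "inj_on h X" by (rule inj_onI) (use hU UU in blast)
  have surj: "h ` X = Y"
  proof
    show "h ` X \<subseteq> Y" using hY by blast
    show "Y \<subseteq> h ` X"
    proof
      fix y assume "y \<in> Y"
      then obtain k where "y = ey k" using rY by auto
      then obtain x where xy: "(x,y) \<in> U" using RU by blast
      then have x: "x \<in> X" using UXY by blast
      then have "h x = y" using UU[OF hU[OF x] xy] by blast
      then show "y \<in> h ` X" using x by blast
    qed
  qed
  have "bilip lam dX dY X Y h"
    unfolding bilip_def
  proof (intro conjI ballI impI)
    show "h ` X \<subseteq> Y" using surj by simp
    show "inj_on h X" by (rule inj)
    fix a b assume "a \<in> X" "b \<in> X" "a \<noteq> b"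
    then show "dY (h a) (h b) < lam * dX a b" "dX a b < lam * dY (h a) (h b)"
      using UU[OF hU hU] by blast+
  qed
  moreover have "bij_betw h X Y" using inj surj by (simp add: bij_betw_def)
  ultimately show "\<exists>f. bilip lam dX dY X Y f \<and> bij_betw f X Y" by blast
qed

end
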